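(* Let $(A,B)\in\mathcal{AB}$ and let $\mu$ be a matching that is component-wise individually rational at $(A,B)$. Then $\mu$ is unambiguously efficient at $(A,B)$ if and only if there is no cycle of $\mu$ that is both component-wise individually rational at $(A,B)$ and Pareto-improving.
   Context: Setup. $I=\{1,\dots,n\}$ is a finite set of agents and $O$ a finite set of objects. Each agent $i$ is endowed with a nonempty set $\Omega_i\subseteq O$; the sets $\Omega_i$ are pairwise disjoint and $\bigcup_{i\in I}\Omega_i=O$. A matching is a map $\mu:I\to 2^O$ with $\mu(i)\cap\mu(j)=\emptyset$ for $i\neq j$ and $|\mu(i)|=|\Omega_i|$ for every $i$; $\mathcal M$ is the set of matchings. Agent $i$'s consumption set is $\mathcal X_i=\{X\subseteq O:|X|=|\Omega_i|\}$; a preference of $i$ is a complete, transitive, reflexive relation $R_i$ on $\mathcal X_i$ with strict part $P_i$. A marginal preference of $i$ is a weak order $\succsim_i$ on $O$. $R_i$ is responsive to $\succsim_i$ if for all $o,p\in O$ and all $Q\in\mathcal X_i$ with $o\in Q$, $p\notin Q$: $Q\mathrel{R_i}(Q\setminus\{o\})\cup\{p\}$ iff $o\succsim_i p$. Given a profile $R$, $\mu'$ Pareto-improves $\mu$ if $\mu'(i)\mathrel{R_i}\mu(i)$ for all $i$ and $\mu'(i)\mathrel{P_i}\mu(i)$ for some $i$; $\mu$ is Pareto-efficient if no matching Pareto-improves it. Given a profile $\succsim$ of marginal preferences, $\mu$ is unambiguously efficient if it is Pareto-efficient at every profile $R$ such that each $R_i$ is responsive to $\succsim_i$. The matching $\mu$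 is component-wise individually rational at $\succsim$ if for every $i\in I$ and every $\omega\in\Omega_i$, $|\{o\in\mu(i):o\succsim_i\omega\}|\ge|\{o\in\Omega_i:o\succsim_i\omega\}|$. Trichotomous profiles. $\mathcal{AB}_i$ is the set of pairs $(A_i,B_i)$ of disjoint subsets of $O$ with $\Omega_i\subseteq A_i\cup B_i$, and $\mathcal{AB}=\times_{i\in I}\mathcal{AB}_i$. A pair $(A_i,B_i)$ induces the marginal preference $\succsim_i$ in which all objects of $A_i$ are indifferent to each other and strictly preferred to all objects of $B_i$, which are indifferent to each other and strictly preferred to all objects of $O\setminus(A_i\cup B_i)$, which are indifferent to each other. Properties "at $(A,B)$" refer to the induced marginal profile. Cycles. Given a matching $\mu$, a cycle of $\mu$ is $C=(i_1,o_1,i_2,o_2,\dots,i_L,o_L)$ with distinct agents and distinct objects such that for each $l\in\{2,\dots,L\}$, $o_{l-1}\in\mu(i_l)$ and $o_l\notin\mu(i_l)$, and $o_L\in\mu(i_1)$. The matching $\mu+C$ is obtained from $\mu$ by replacing, for each $l\in\{2,\dots,L\}$, $o_{l-1}$ in $\mu(i_l)$ by $o_l$, and replacing $o_L$ in $\mu(i_1)$ by $o_1$. The cycle $C$ is component-wise individually rational at $(A,B)$ if $o_l\in A_{i_l}\cup B_{i_l}$ for every $l$. $C$ increases (resp. decreases) $i$'s welfare if $|(\mu+C)(i)\cap A_i|>|\mu(i)\cap A_i|$ (resp. $<$); $C$ is Pareto-improving if it increases some agent's welfare and decreases no agent's welfare. *)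

theory Defs
  imports Main
begin

definition economy :: "'i set \<Rightarrow> 'x set \<Rightarrow> ('i \<Rightarrow> 'x set) \<Rightarrow> bool" where
  "economy I Obj Om \<longleftrightarrow> finite I \<and> finite Obj \<and> (\<forall>i\<in>I. Om i \<noteq> {})
     \<and> (\<forall>i\<in>I. \<forall>j\<in>I. i \<noteq> j \<longrightarrow> Om i \<inter> Om j = {}) \<and> (\<Union>i\<in>I. Om i) = Obj"

definition matching :: "'i set \<Rightarrow> 'x set \<Rightarrow> ('i \<Rightarrow> 'x set) \<Rightarrow> ('i \<Rightarrow> 'x set) \<Rightarrow> bool" where
  "matching I Obj Om mu \<longleftrightarrow> (\<forall>i\<in>I. mu i \<subseteq> Obj)
     \<and> (\<forall>i\<in>I. \<forall>j\<in>I. i \<noteq> j \<longrightarrow> mu i \<inter> mu j = {})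
     \<and> (\<forall>i\<in>I. card (mu i) = card (Om i))"

definition consumption :: "'x set \<Rightarrow> nat \<Rightarrow> 'x set set" where
  "consumption Obj k = {X. X \<subseteq> Obj \<and> card X = k}"

definition preference_on :: "'x set set \<Rightarrow> ('x set \<Rightarrow> 'x set \<Rightarrow> bool) \<Rightarrow> bool" where
  "preference_on Xs R \<longleftrightarrow> (\<forall>X\<in>Xs. \<forall>Y\<in>Xs. R X Y \<or> R Y X) \<and> (\<forall>X\<in>Xs. R X X)
     \<and> (\<forall>X\<in>Xs. \<forall>Y\<in>Xs. \<forall>Z\<in>Xs. R X Y \<longrightarrow> R Y Z \<longrightarrow> R X Z)"

definition strict :: "('a \<Rightarrow> 'a \<Rightarrow> bool) \<Rightarrow> 'a \<Rightarrow> 'a \<Rightarrow> bool" where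
  "strict R X Y \<longleftrightarrow> R X Y \<and> \<not> R Y X"

definition responsive :: "'x set \<Rightarrow> 'x set set \<Rightarrow> ('x set \<Rightarrow> 'x set \<Rightarrow> bool) \<Rightarrow> ('x \<Rightarrow> 'x \<Rightarrow> bool) \<Rightarrow> bool" where
  "responsive Obj Xs R mp \<longleftrightarrow> (\<forall>x\<in>Obj. \<forall>y\<in>Obj. \<forall>Q\<in>Xs. x \<in> Q \<longrightarrow> y \<notin> Q \<longrightarrow>
       (R Q ((Q - {x}) \<union> {y}) \<longleftrightarrow> mp x y))"

definition pareto_improves ::
  "'i set \<Rightarrow> ('i \<Rightarrow> 'x set \<Rightarrow> 'x set \<Rightarrow> bool) \<Rightarrow> ('i \<Rightarrow> 'x set) \<Rightarrow> ('i \<Rightarrow> 'x set) \<Rightarrow> bool" where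
  "pareto_improves I R mu' mu \<longleftrightarrow> (\<forall>i\<in>I. R i (mu' i) (mu i)) \<and> (\<exists>i\<in>I. strict (R i) (mu' i) (mu i))"

definition pareto_efficient ::
  "'i set \<Rightarrow> 'x set \<Rightarrow> ('i \<Rightarrow> 'x set) \<Rightarrow> ('i \<Rightarrow> 'x set \<Rightarrow> 'x set \<Rightarrow> bool) \<Rightarrow> ('i \<Rightarrow> 'x set) \<Rightarrow> bool" where
  "pareto_efficient I Obj Om R mu \<longleftrightarrow> \<not> (\<exists>mu'. matching I Obj Om mu' \<and> pareto_improves I R mu' mu)"

definition unambiguously_efficient ::
  "'i set \<Rightarrow> 'x set \<Rightarrow> ('i \<Rightarrow> 'x set) \<Rightarrow> ('i \<Rightarrow> 'x \<Rightarrow> 'x \<Rightarrow> bool) \<Rightarrow> ('i \<Rightarrow> 'x set) \<Rightarrow> bool" where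
  "unambiguously_efficient I Obj Om mp mu \<longleftrightarrow>
     (\<forall>R. (\<forall>i\<in>I. preference_on (consumption Obj (card (Om i))) (R i)
               \<and> responsive Obj (consumption Obj (card (Om i))) (R i) (mp i))
          \<longrightarrow> pareto_efficient I Obj Om R mu)"

definition cw_IR ::
  "'i set \<Rightarrow> ('i \<Rightarrow> 'x set) \<Rightarrow> ('i \<Rightarrow> 'x \<Rightarrow> 'x \<Rightarrow> bool) \<Rightarrow> ('i \<Rightarrow> 'x set) \<Rightarrow> bool" where
  "cw_IR I Om mp mu \<longleftrightarrow> (\<forall>i\<in>I. \<forall>w\<in>Om i.
      card {x\<in>mu i. mp i x w} \<ge> card {x\<in>Om i. mp i x w})"

definition AB_profile :: "'i set \<Rightarrow> 'x set \<Rightarrow> ('i \<Rightarrow> 'x set) \<Rightarrow> ('i \<Rightarrow> 'x set) \<Rightarrow> ('i \<Rightarrow> 'x set) \<Rightarrow> bool" where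
  "AB_profile I Obj Om A B \<longleftrightarrow> (\<forall>i\<in>I. A i \<subseteq> Obj \<and> B i \<subseteq> Obj \<and> A i \<inter> B i = {} \<and> Om i \<subseteq> A i \<union> B i)"

definition tier :: "'x set \<Rightarrow> 'x set \<Rightarrow> 'x \<Rightarrow> nat" where
  "tier Ai Bi x = (if x \<in> Ai then 2 else if x \<in> Bi then 1 else 0)"

definition induced :: "('i \<Rightarrow> 'x set) \<Rightarrow> ('i \<Rightarrow> 'x set) \<Rightarrow> 'i \<Rightarrow> 'x \<Rightarrow> 'x \<Rightarrow> bool" where
  "induced A B i x y \<longleftrightarrow> tier (A i) (B i) y \<le> tier (A i) (B i) x"

text \<open>Cycles.  A cycle (i_1,o_1,...,i_L,o_L) is the nonempty list
  [(i_1,o_1),...,(i_L,o_L)] (0-indexed here); the predecessor of position k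
  is (k + L - 1) mod L.\<close>
definition cyc_prev :: "nat \<Rightarrow> nat \<Rightarrow> nat" where
  "cyc_prev L k = (k + L - 1) mod L"

definition is_cycle :: "'i set \<Rightarrow> ('i \<Rightarrow> 'x set) \<Rightarrow> ('i \<times> 'x) list \<Rightarrow> bool" where
  "is_cycle I mu C \<longleftrightarrow> C \<noteq> [] \<and> distinct (map fst C) \<and> distinct (map snd C)
     \<and> (\<forall>k<length C. fst (C ! k) \<in> I)
     \<and> (\<forall>k. 1 \<le> k \<and> k < length C \<longrightarrow>
           snd (C ! (k - 1)) \<in> mu (fst (C ! k)) \<and> snd (C ! k) \<notin> mu (fst (C ! k)))
     \<and> snd (C ! (length C - 1)) \<in> mu (fst (C ! 0))"

definition apply_cycle :: "('i \<Rightarrow> 'x set) \<Rightarrow> ('i \<times> 'x) list \<Rightarrow> 'i \<Rightarrow> 'x set" where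
  "apply_cycle mu C i =
     (if \<exists>k<length C. fst (C ! k) = i then
        (let k = (THE k. k < length C \<and> fst (C ! k) = i) in
          (mu i - {snd (C ! cyc_prev (length C) k)}) \<union> {snd (C ! k)})
      else mu i)"

definition cycle_cw_IR :: "('i \<Rightarrow> 'x set) \<Rightarrow> ('i \<Rightarrow> 'x set) \<Rightarrow> ('i \<times> 'x) list \<Rightarrow> bool" where
  "cycle_cw_IR A B C \<longleftrightarrow> (\<forall>k<length C. snd (C ! k) \<in> A (fst (C ! k)) \<union> B (fst (C ! k)))"

definition cycle_pareto_improving ::
  "'i set \<Rightarrow> ('i \<Rightarrow> 'x set) \<Rightarrow> ('i \<Rightarrow> 'x set) \<Rightarrow> ('i \<times> 'x) list \<Rightarrow> bool" where
  "cycle_pareto_improving I A mu C \<longleftrightarrow>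
     (\<exists>i\<in>I. card (apply_cycle mu C i \<inter> A i) > card (mu i \<inter> A i))
     \<and> (\<forall>i\<in>I. \<not> card (apply_cycle mu C i \<inter> A i) < card (mu i \<inter> A i))"

end

theory Submission
  imports Defs
begin


definition adj :: "'a list \<Rightarrow> ('a \<times> 'a) set" where
  "adj xs = set (zip (butlast xs) (tl xs))"

definition cp :: "'a list \<Rightarrow> ('a \<times> 'a) set" where
  "cp xs = set (zip xs (rotate1 xs))"

lemma zip_snoc_aux:
  assumes "V \<noteq> []"
  shows "zip V (tl V @ [x]) = zip (butlast V) (tl V) @ [(last V, x)]"
proof -
  have "V = butlast V @ [last V]" using assms by simp
  then have "zip V (tl V @ [x]) = zip (butlast V @ [last V]) (tl V @ [x])" by simp
  also have "\<dots> = zip (butlast V) (tl V) @ zip [last V] [x]"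
    by (rule zip_append) (cases V, auto)
  finally show ?thesis by simp
qed

lemma cp_single: "V \<noteq> [] \<Longrightarrow> cp V = adj V \<union> {(last V, hd V)}"
  unfolding cp_def adj_def by (cases V) (auto simp: zip_snoc_aux[of "_ # _", simplified])

lemma cp_append:
  assumes "V \<noteq> []" "W \<noteq> []"
  shows "cp (V @ W) = adj V \<union> adj W \<union> {(last V, hd W), (last W, hd V)}"
proof -
  have r: "rotate1 (V @ W) = (tl V @ [hd W]) @ (tl W @ [hd V])"
    using assms by (cases V; cases W) auto
  have "zip (V @ W) (rotate1 (V @ W)) = zip V (tl V @ [hd W]) @ zip W (tl W @ [hd V])"
    unfolding r by (rule zip_append) (use assms in \<open>cases V, auto\<close>)
  then show ?thesis unfolding cp_def adj_def
    using zip_snoc_aux[OF assms(1), of "hd W"] zip_snoc_aux[OF assms(2), of "hd V"] by auto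
qed

lemma cp_rot: "cp (U @ V) = cp (V @ U)"
proof (cases "U = [] \<or> V = []")
  case True then show ?thesis by auto
next
  case False then show ?thesis by (simp add: cp_append Un_ac insert_commute)
qed

lemma cp_nth: "cp xs = {(xs ! k, xs ! (Suc k mod length xs)) | k. k < length xs}"
  unfolding cp_def set_zip by (auto simp: nth_rotate1)


definition Ev :: "('i \<Rightarrow> 'x set) \<Rightarrow> ('i \<Rightarrow> 'x set) \<Rightarrow> ('x \<Rightarrow> 'i) \<Rightarrow> 'x \<times> 'x \<Rightarrow> bool" where
  "Ev A B own p \<longleftrightarrow> snd p \<in> A (own (fst p)) \<union> B (own (fst p)) \<and> (fst p \<in> A (own (fst p)) \<longrightarrow> snd p \<in> A (own (fst p)))"

definition Imp :: "('i \<Rightarrow> 'x set) \<Rightarrow> ('x \<Rightarrow> 'i) \<Rightarrow> 'x \<times> 'x \<Rightarrow> bool" where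
  "Imp A own p \<longleftrightarrow> snd p \<in> A (own (fst p)) \<and> fst p \<notin> A (own (fst p))"

definition walkok where
  "walkok A B own xs \<longleftrightarrow> xs \<noteq> [] \<and> (\<forall>p\<in>cp xs. Ev A B own p) \<and> (\<exists>p\<in>cp xs. Imp A own p)"

lemma comb:
  assumes ab: "own a = own b"
    and PV: "\<forall>p\<in>PV. Ev A B own p" and PW: "\<forall>p\<in>PW. Ev A B own p"
    and e1: "Ev A B own (b,w)" and e2: "Ev A B own (a,v)"
    and p0: "q \<in> PV \<union> PW \<union> {(b,w),(a,v)}" and i0: "Imp A own q"
  shows "((\<forall>p\<in>PV \<union> {(b,v)}. Ev A B own p) \<and> (\<exists>p\<in>PV \<union> {(b,v)}. Imp A own p))
       \<or> ((\<forall>p\<in>PW \<union> {(a,w)}. Ev A B own p) \<and> (\<exists>p\<in>PW \<union> {(a,w)}. Imp A own p))"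
proof -
  have f1: "Ev A B own (b,v) \<or> (Ev A B own (a,w) \<and> Imp A own (a,w))"
    using e1 e2 ab unfolding Ev_def Imp_def by auto
  have f2: "Ev A B own (a,w) \<or> (Ev A B own (b,v) \<and> Imp A own (b,v))"
    using e1 e2 ab unfolding Ev_def Imp_def by auto
  have f3: "Imp A own (b,w) \<Longrightarrow> Imp A own (b,v) \<or> Imp A own (a,w)"
    using e1 e2 ab unfolding Ev_def Imp_def by auto
  have f4: "Imp A own (a,v) \<Longrightarrow> Imp A own (b,v) \<or> Imp A own (a,w)"
    using e1 e2 ab unfolding Ev_def Imp_def by auto
  show ?thesis
  proof (cases "q \<in> PV")
    case True then show ?thesis using f1 PV PW i0 f2 by blast
  next
    case nPV: False
    show ?thesis
    proof (cases "q \<in> PW")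
      case True then show ?thesis using f1 PV PW i0 f2 by blast
    next
      case False
      then have "q = (b,w) \<or> q = (a,v)" using p0 nPV by blast
      then have "Imp A own (b,v) \<or> Imp A own (a,w)" using f3 f4 i0 by blast
      then show ?thesis using f1 f2 PV PW by blast
    qed
  qed
qed

lemma decomp_map:
  assumes "\<not> distinct (map f xs)"
  shows "\<exists>us a vs b ws. xs = us @ a # vs @ b # ws \<and> f a = f b"
proof -
  obtain as y bs cs where "map f xs = as @ [y] @ bs @ [y] @ cs"
    using not_distinct_decomp[OF assms] by blast
  then obtain us r where 1: "xs = us @ r" "map f r = y # bs @ y # cs"
    by (auto simp: map_eq_append_conv)
  then obtain a r' where 2: "r = a # r'" "f a = y" "map f r' = bs @ y # cs"
    by (auto simp: Cons_eq_map_conv map_eq_Cons_conv)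
  then obtain vs r'' where 3: "r' = vs @ r''" "map f r'' = y # cs"
    by (auto simp: map_eq_append_conv)
  then obtain b ws where 4: "r'' = b # ws" "f b = y"
    by (auto simp: map_eq_Cons_conv)
  have "xs = us @ a # vs @ b # ws" "f a = f b" using 1 2 3 4 by auto
  then show ?thesis by blast
qed

lemma reduce:
  "walkok A B own xs \<Longrightarrow> \<exists>ys. walkok A B own ys \<and> distinct (map own ys) \<and> set ys \<subseteq> set xs"
proof (induction xs rule: length_induct)
  case (1 xs)
  show ?case
  proof (cases "distinct (map own xs)")
    case True then show ?thesis using 1(2) by blast
  next
    case False
    then obtain us a vs b ws where xs: "xs = us @ a # vs @ b # ws" and ab: "own a = own b"
      using decomp_map by blast
    define V where "V = vs @ [b]"
    define W where "W = ws @ us @ [a]"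
    have VW: "V \<noteq> []" "W \<noteq> []" by (auto simp: V_def W_def)
    have lV: "last V = b" and lW: "last W = a" by (auto simp: V_def W_def)
    have "cp xs = cp ((vs @ [b] @ ws) @ (us @ [a]))"
      unfolding xs using cp_rot[of "us @ [a]" "vs @ [b] @ ws"] by simp
    also have "\<dots> = cp (V @ W)" by (simp add: V_def W_def)
    finally have cpx: "cp xs = adj V \<union> adj W \<union> {(b, hd W), (a, hd V)}"
      using cp_append[OF VW] lV lW by simp
    have cpV: "cp V = adj V \<union> {(b, hd V)}" using cp_single[OF VW(1)] lV by simp
    have cpW: "cp W = adj W \<union> {(a, hd W)}" using cp_single[OF VW(2)] lW by simp
    from 1(2) have ev: "\<forall>p\<in>cp xs. Ev A B own p" and im: "\<exists>p\<in>cp xs. Imp A own p"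
      unfolding walkok_def by auto
    then obtain p0 where "p0 \<in> cp xs" "Imp A own p0" by blast
    have "((\<forall>p\<in>adj V \<union> {(b,hd V)}. Ev A B own p) \<and> (\<exists>p\<in>adj V \<union> {(b,hd V)}. Imp A own p))
       \<or> ((\<forall>p\<in>adj W \<union> {(a,hd W)}. Ev A B own p) \<and> (\<exists>p\<in>adj W \<union> {(a,hd W)}. Imp A own p))"
      apply (rule comb[where PV="adj V" and PW="adj W" and w="hd W" and v="hd V" and q=p0, OF ab])
      using ev \<open>p0 \<in> cp xs\<close> \<open>Imp A own p0\<close> cpx by auto
    then have "walkok A B own V \<or> walkok A B own W"
      unfolding walkok_def cpV cpW using VW by blast
    moreover have "length V < length xs" "length W < length xs" "set V \<subseteq> set xs" "set W \<subseteq> set xs"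
      by (auto simp: V_def W_def xs)
    ultimately show ?thesis using 1(1) by (meson order_trans)
  qed
qed


lemma cyc_prev_0: "L > 0 \<Longrightarrow> cyc_prev L 0 = L - 1"
  unfolding cyc_prev_def by simp

lemma cyc_prev_Suc: "Suc k < L \<Longrightarrow> cyc_prev L (Suc k) = k"
  unfolding cyc_prev_def by simp

lemma cyc_prev_lt: "k < L \<Longrightarrow> cyc_prev L k < L"
  unfolding cyc_prev_def by simp

lemma the_idx:
  assumes "distinct (map fst C)" "k < length C"
  shows "(THE k'. k' < length C \<and> fst (C ! k') = fst (C ! k)) = k"
proof (rule the_equality)
  fix k' assume "k' < length C \<and> fst (C ! k') = fst (C ! k)"
  then show "k' = k" using assms by (metis distinct_conv_nth length_map nth_map)
qed (use assms in auto)

lemma apply_cycle_in: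
  assumes "distinct (map fst C)" "k < length C"
  shows "apply_cycle mu C (fst (C ! k)) =
     (mu (fst (C ! k)) - {snd (C ! cyc_prev (length C) k)}) \<union> {snd (C ! k)}"
  unfolding apply_cycle_def using assms the_idx[OF assms] by auto

lemma apply_cycle_out:
  assumes "i \<notin> fst ` set C"
  shows "apply_cycle mu C i = mu i"
proof -
  have "\<not> (\<exists>k<length C. fst (C ! k) = i)" using assms by (metis image_eqI nth_mem)
  then show ?thesis unfolding apply_cycle_def by (simp only: if_False) 
qed

definition disj :: "'i set \<Rightarrow> ('i \<Rightarrow> 'x set) \<Rightarrow> bool" where
  "disj I mu \<longleftrightarrow> (\<forall>i\<in>I. \<forall>j\<in>I. i \<noteq> j \<longrightarrow> mu i \<inter> mu j = {})"

lemma cyc_pred_in: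
  assumes "is_cycle I mu C" "k < length C"
  shows "snd (C ! cyc_prev (length C) k) \<in> mu (fst (C ! k))"
proof (cases k)
  case 0 then show ?thesis using assms by (simp add: is_cycle_def cyc_prev_0)
next
  case (Suc m)
  then have "cyc_prev (length C) k = k - 1" using assms(2) cyc_prev_Suc by simp
  then show ?thesis using assms Suc unfolding is_cycle_def by auto
qed

lemma cyc_obj_notin:
  assumes "is_cycle I mu C" "k < length C" "length C \<ge> 2" "disj I mu"
  shows "snd (C ! k) \<notin> mu (fst (C ! k))"
proof (cases k)
  case 0
  have "snd (C ! 0) \<in> mu (fst (C ! 1))" using assms unfolding is_cycle_def
    by (metis diff_self_eq_0 le_numeral_extra(4) less_le_trans numeral_2_eq_2 one_less_numeral_iff semiring_norm(76))
  moreover have "fst (C ! 0) \<noteq> fst (C ! 1)" using assms unfolding is_cycle_def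
    by (metis One_nat_def Suc_1 Suc_le_lessD distinct_conv_nth length_map nth_map zero_neq_one zero_less_Suc less_le_trans)
  moreover have "fst (C ! 0) \<in> I" "fst (C ! 1) \<in> I" using assms unfolding is_cycle_def by auto
  ultimately show ?thesis using assms(4) 0 unfolding disj_def by blast
next
  case (Suc m) then show ?thesis using assms unfolding is_cycle_def by auto
qed

lemma card_swap:
  assumes "finite M" "p \<in> M" "q \<notin> M"
  shows "int (card ((M - {p} \<union> {q}) \<inter> S)) = int (card (M \<inter> S)) - (if p \<in> S then 1 else 0) + (if q \<in> S then 1 else 0)"
proof -
  have e: "(M - {p} \<union> {q}) \<inter> S = ((M \<inter> S) - {p}) \<union> (if q \<in> S then {q} else {})" by auto
  have f: "finite (M \<inter> S)" using assms by auto
  have g: "p \<in> S \<Longrightarrow> card (M \<inter> S) \<ge> 1" using assms f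
    by (metis IntI One_nat_def Suc_leI card_gt_0_iff empty_iff)
  show ?thesis unfolding e using assms f g
    by (auto simp: card_insert_if card_Diff_singleton_if of_nat_diff)
qed

lemma sum_swap:
  assumes "finite M" "p \<in> M" "q \<notin> M"
  shows "int (sum t (M - {p} \<union> {q})) = int (sum t M) - int (t p) + int (t q)"
proof -
  have "sum t (M - {p} \<union> {q}) = sum t (M - {p}) + t q" using assms by (simp add: sum.insert_if)
  moreover have "sum t M = sum t (M - {p}) + t p" using assms by (simp add: sum.remove)
  ultimately show ?thesis by simp
qed


lemma apply_cycle_k:
  assumes "is_cycle I mu C" "length C \<ge> 2" "disj I mu" "k < length C"
  shows "apply_cycle mu C (fst (C ! k)) =
     (mu (fst (C ! k)) - {snd (C ! cyc_prev (length C) k)}) \<union> {snd (C ! k)}"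
    "snd (C ! cyc_prev (length C) k) \<in> mu (fst (C ! k))"
    "snd (C ! k) \<notin> mu (fst (C ! k))"
    "fst (C ! k) \<in> I"
  using apply_cycle_in[of C k mu] cyc_pred_in[OF assms(1,4)] cyc_obj_notin[OF assms(1,4,2,3)] assms
  unfolding is_cycle_def by auto

lemma card_k:
  assumes "is_cycle I mu C" "length C \<ge> 2" "disj I mu" "k < length C" "finite (mu (fst (C ! k)))"
  shows "int (card (apply_cycle mu C (fst (C ! k)) \<inter> S)) = int (card (mu (fst (C ! k)) \<inter> S))
     - (if snd (C ! cyc_prev (length C) k) \<in> S then 1 else 0) + (if snd (C ! k) \<in> S then 1 else 0)"
  using apply_cycle_k[OF assms(1-4)] card_swap[OF assms(5)] by simp

lemma cpi_char:
  assumes "is_cycle I mu C" "length C \<ge> 2" "disj I mu" "\<forall>i\<in>I. finite (mu i)"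
  shows "cycle_pareto_improving I A mu C \<longleftrightarrow>
    (\<exists>k<length C. snd (C ! k) \<in> A (fst (C ! k)) \<and> snd (C ! cyc_prev (length C) k) \<notin> A (fst (C ! k))) \<and>
    (\<forall>k<length C. snd (C ! cyc_prev (length C) k) \<in> A (fst (C ! k)) \<longrightarrow> snd (C ! k) \<in> A (fst (C ! k)))"
    (is "?L \<longleftrightarrow> ?R1 \<and> ?R2")
proof
  assume L: ?L
  have ck: "\<And>k. k < length C \<Longrightarrow> int (card (apply_cycle mu C (fst (C ! k)) \<inter> A (fst (C ! k)))) = int (card (mu (fst (C ! k)) \<inter> A (fst (C ! k))))
     - (if snd (C ! cyc_prev (length C) k) \<in> A (fst (C ! k)) then 1 else 0) + (if snd (C ! k) \<in> A (fst (C ! k)) then 1 else 0)"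
    using card_k[OF assms(1-3)] apply_cycle_k(4)[OF assms(1-3)] assms(4) by blast
  from L obtain i where i: "i \<in> I" "card (apply_cycle mu C i \<inter> A i) > card (mu i \<inter> A i)"
    unfolding cycle_pareto_improving_def by blast
  have "i \<in> fst ` set C" using i apply_cycle_out[of i C mu] by force
  then obtain k where k: "k < length C" "i = fst (C ! k)" by (auto simp: in_set_conv_nth)
  have R1: ?R1
  proof (intro exI conjI)
    show "k < length C" by fact
    have "int (card (apply_cycle mu C i \<inter> A i)) > int (card (mu i \<inter> A i))" using i by simp
    then show "snd (C ! k) \<in> A (fst (C ! k))" "snd (C ! cyc_prev (length C) k) \<notin> A (fst (C ! k))"
      using ck[OF k(1)] k(2) by (auto split: if_splits)
  qed
  have R2: ?R2
  proof (intro allI impI)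
    fix m assume m: "m < length C" "snd (C ! cyc_prev (length C) m) \<in> A (fst (C ! m))"
    have "fst (C ! m) \<in> I" using apply_cycle_k(4)[OF assms(1-3) m(1)] .
    then have "\<not> int (card (apply_cycle mu C (fst (C ! m)) \<inter> A (fst (C ! m)))) < int (card (mu (fst (C ! m)) \<inter> A (fst (C ! m))))"
      using L unfolding cycle_pareto_improving_def by auto
    then show "snd (C ! m) \<in> A (fst (C ! m))" using ck[OF m(1)] m(2) by (auto split: if_splits)
  qed
  show "?R1 \<and> ?R2" using R1 R2 by blast
next
  assume R: "?R1 \<and> ?R2"
  have ck: "\<And>k. k < length C \<Longrightarrow> int (card (apply_cycle mu C (fst (C ! k)) \<inter> A (fst (C ! k)))) = int (card (mu (fst (C ! k)) \<inter> A (fst (C ! k))))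
     - (if snd (C ! cyc_prev (length C) k) \<in> A (fst (C ! k)) then 1 else 0) + (if snd (C ! k) \<in> A (fst (C ! k)) then 1 else 0)"
    using card_k[OF assms(1-3)] apply_cycle_k(4)[OF assms(1-3)] assms(4) by blast
  from R obtain k where k: "k < length C" "snd (C ! k) \<in> A (fst (C ! k))" "snd (C ! cyc_prev (length C) k) \<notin> A (fst (C ! k))"
    by blast
  have e1: "\<exists>i\<in>I. card (apply_cycle mu C i \<inter> A i) > card (mu i \<inter> A i)"
  proof (intro bexI)
    show "fst (C ! k) \<in> I" using apply_cycle_k(4)[OF assms(1-3) k(1)] .
    have "int (card (apply_cycle mu C (fst (C ! k)) \<inter> A (fst (C ! k)))) > int (card (mu (fst (C ! k)) \<inter> A (fst (C ! k))))"
      using ck[OF k(1)] k(2,3) by simp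
    then show "card (apply_cycle mu C (fst (C ! k)) \<inter> A (fst (C ! k))) > card (mu (fst (C ! k)) \<inter> A (fst (C ! k)))"
      by linarith
  qed
  have e2: "\<forall>i\<in>I. \<not> card (apply_cycle mu C i \<inter> A i) < card (mu i \<inter> A i)"
  proof
    fix i assume "i \<in> I"
    show "\<not> card (apply_cycle mu C i \<inter> A i) < card (mu i \<inter> A i)"
    proof (cases "i \<in> fst ` set C")
      case False then show ?thesis using apply_cycle_out[OF False] by simp
    next
      case True
      then obtain m where m: "m < length C" "i = fst (C ! m)" by (auto simp: in_set_conv_nth)
      have "int (card (apply_cycle mu C i \<inter> A i)) \<ge> int (card (mu i \<inter> A i))"
        using ck[OF m(1)] m(2) R m(1) by (auto split: if_splits)
      then show ?thesis by linarith
    qed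
  qed
  show ?L using e1 e2 unfolding cycle_pareto_improving_def by blast
qed


lemma cyc_obj_next:
  assumes "is_cycle I mu C" "k < length C"
  shows "snd (C ! k) \<in> mu (fst (C ! (Suc k mod length C)))"
proof (cases "Suc k < length C")
  case True then show ?thesis using assms unfolding is_cycle_def
    by (metis diff_Suc_1 le_add1 mod_less plus_1_eq_Suc)
next
  case False
  then have "Suc k = length C" using assms(2) by simp
  then show ?thesis using assms unfolding is_cycle_def by (metis diff_Suc_1 mod_self)
qed

lemma suc_mod_inj:
  assumes "m < L" "k < L" "Suc m mod L = k"
  shows "m = cyc_prev L k"
proof (cases "Suc m < L")
  case True
  then have "k = Suc m" using assms by simp
  then have "k + L - 1 = m + L" by simp
  then show ?thesis unfolding cyc_prev_def using assms(1) by simp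
next
  case False
  then have "Suc m = L" using assms by simp
  then have "k = 0" using assms by simp
  then show ?thesis unfolding cyc_prev_def using \<open>Suc m = L\<close> by simp
qed

lemma dist_fst:
  assumes "distinct (map fst C)" "a < length C" "b < length C" "fst (C ! a) = fst (C ! b)"
  shows "a = b"
  using assms by (metis distinct_conv_nth length_map nth_map)

lemma mu_cycle_objs:
  assumes "is_cycle I mu C" "disj I mu" "m < length C" "i \<in> I" "snd (C ! m) \<in> mu i"
  shows "i = fst (C ! (Suc m mod length C))"
proof -
  have "length C > 0" using assms(3) by (cases C) auto
  then have "Suc m mod length C < length C" by simp
  then have "fst (C ! (Suc m mod length C)) \<in> I" using assms(1) unfolding is_cycle_def by blast
  then show ?thesis using cyc_obj_next[OF assms(1,3)] assms(2,4,5) unfolding disj_def by blast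
qed


lemma apply_char:
  assumes "is_cycle I mu C" "length C \<ge> 2" "disj I mu" "i \<in> I"
  shows "x \<in> apply_cycle mu C i \<longleftrightarrow> (x \<in> mu i \<and> x \<notin> snd ` set C) \<or> (\<exists>k<length C. fst (C ! k) = i \<and> x = snd (C ! k))"
proof (cases "i \<in> fst ` set C")
  case False
  have "x \<in> mu i \<Longrightarrow> x \<notin> snd ` set C"
  proof
    assume "x \<in> mu i" "x \<in> snd ` set C"
    then obtain m where m: "m < length C" "x = snd (C ! m)" by (auto simp: in_set_conv_nth)
    then have "i = fst (C ! (Suc m mod length C))" using mu_cycle_objs[OF assms(1,3) m(1) assms(4)] \<open>x \<in> mu i\<close> by simp
    moreover have "0 < length C" using m(1) by linarith
    then have "Suc m mod length C < length C" by simp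
    ultimately show False using False by (metis image_eqI nth_mem)
  qed
  moreover have "\<not> (\<exists>k<length C. fst (C ! k) = i)" using False by (metis image_eqI nth_mem)
  ultimately show ?thesis using apply_cycle_out[OF False] by auto
next
  case True
  then obtain k where k: "k < length C" "i = fst (C ! k)" by (auto simp: in_set_conv_nth)
  have dist: "distinct (map fst C)" using assms unfolding is_cycle_def by blast
  have a: "apply_cycle mu C i = mu i - {snd (C ! cyc_prev (length C) k)} \<union> {snd (C ! k)}"
    using apply_cycle_k(1)[OF assms(1-3) k(1)] k by simp
  have b: "x \<in> mu i \<and> x \<in> snd ` set C \<Longrightarrow> x = snd (C ! cyc_prev (length C) k)"
  proof -
    assume h: "x \<in> mu i \<and> x \<in> snd ` set C"
    then obtain m where m: "m < length C" "x = snd (C ! m)" by (auto simp: in_set_conv_nth)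
    then have "i = fst (C ! (Suc m mod length C))" using mu_cycle_objs[OF assms(1,3) m(1) assms(4)] h by simp
    moreover have "0 < length C" using m(1) by linarith
    then have "Suc m mod length C < length C" by simp
    ultimately have "Suc m mod length C = k" using dist_fst[OF dist, of k "Suc m mod length C"] k m by simp
    then show ?thesis using suc_mod_inj m k by simp
  qed
  have c: "snd (C ! cyc_prev (length C) k) \<in> snd ` set C"
    using cyc_prev_lt[OF k(1)] by (metis image_eqI nth_mem)
  have d: "(\<exists>m<length C. fst (C ! m) = i \<and> x = snd (C ! m)) \<longleftrightarrow> x = snd (C ! k)"
    using dist_fst[OF dist] k by auto
  have e: "snd (C ! cyc_prev (length C) k) \<noteq> snd (C ! k)"
    using apply_cycle_k(2,3)[OF assms(1-3) k(1)] by auto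
  show ?thesis unfolding a d using b c e by auto
qed


lemma smod_lt: "k < (L::nat) \<Longrightarrow> Suc k mod L < L"
proof -
  assume "k < L" then have "0 < L" by linarith
  then show ?thesis by simp
qed

lemma apply_matching:
  assumes "matching I Obj Om mu" "is_cycle I mu C" "length C \<ge> 2" "finite Obj"
  shows "matching I Obj Om (apply_cycle mu C)"
proof -
  have dj: "disj I mu" using assms(1) unfolding matching_def disj_def by blast
  have sub: "\<forall>i\<in>I. mu i \<subseteq> Obj" using assms(1) unfolding matching_def by blast
  have objs: "\<And>k. k < length C \<Longrightarrow> snd (C ! k) \<in> Obj"
  proof -
    fix k assume k: "k < length C"
    then have "Suc k mod length C < length C" by (rule smod_lt)
    then have "fst (C ! (Suc k mod length C)) \<in> I" using assms(2) unfolding is_cycle_def by blast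
    then show "snd (C ! k) \<in> Obj" using cyc_obj_next[OF assms(2) k] sub by blast
  qed
  have s1: "\<forall>i\<in>I. apply_cycle mu C i \<subseteq> Obj"
    using apply_char[OF assms(2,3) dj] sub objs by blast
  have dist: "distinct (map snd C)" using assms(2) unfolding is_cycle_def by blast
  have s2: "\<forall>i\<in>I. \<forall>j\<in>I. i \<noteq> j \<longrightarrow> apply_cycle mu C i \<inter> apply_cycle mu C j = {}"
  proof (intro ballI impI)
    fix i j assume ij: "i \<in> I" "j \<in> I" "i \<noteq> j"
    show "apply_cycle mu C i \<inter> apply_cycle mu C j = {}"
    proof (rule ccontr)
      assume "apply_cycle mu C i \<inter> apply_cycle mu C j \<noteq> {}"
      then obtain x where "x \<in> apply_cycle mu C i" "x \<in> apply_cycle mu C j" by blast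
      then have xi: "(x \<in> mu i \<and> x \<notin> snd ` set C) \<or> (\<exists>k<length C. fst (C ! k) = i \<and> x = snd (C ! k))"
        and xj: "(x \<in> mu j \<and> x \<notin> snd ` set C) \<or> (\<exists>k<length C. fst (C ! k) = j \<and> x = snd (C ! k))"
        using apply_char[OF assms(2,3) dj] ij by blast+
      have sc: "\<And>k. k < length C \<Longrightarrow> snd (C ! k) \<in> snd ` set C" by (metis image_eqI nth_mem)
      show False
      proof (cases "x \<in> snd ` set C")
        case False
        then show ?thesis using xi xj dj ij sc unfolding disj_def by blast
      next
        case True
        then obtain k m where "k < length C" "fst (C ! k) = i" "x = snd (C ! k)"
          "m < length C" "fst (C ! m) = j" "x = snd (C ! m)" using xi xj by blast
        then show False using dist ij(3) by (metis distinct_conv_nth length_map nth_map)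
      qed
    qed
  qed
  have s3: "\<forall>i\<in>I. card (apply_cycle mu C i) = card (Om i)"
  proof
    fix i assume i: "i \<in> I"
    have fin: "finite (mu i)" using sub i assms(4) finite_subset by blast
    show "card (apply_cycle mu C i) = card (Om i)"
    proof (cases "i \<in> fst ` set C")
      case False then show ?thesis using apply_cycle_out[OF False] assms(1) i unfolding matching_def by simp
    next
      case True
      then obtain k where k: "k < length C" "i = fst (C ! k)" by (auto simp: in_set_conv_nth)
      have "card (apply_cycle mu C i) = card (mu i)"
      proof -
        have "card (mu i) > 0" using apply_cycle_k(2)[OF assms(2,3) dj k(1)] k(2) fin card_gt_0_iff by blast
        then show ?thesis using apply_cycle_k[OF assms(2,3) dj k(1)] k(2) fin by (simp add: card_insert_if)
      qed
      then show ?thesis using assms(1) i unfolding matching_def by simp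
    qed
  qed
  show ?thesis unfolding matching_def using s1 s2 s3 by blast
qed


lemma econ_finite: "economy I Obj Om \<Longrightarrow> finite Obj" unfolding economy_def by blast

lemma match_disj: "matching I Obj Om mu \<Longrightarrow> disj I mu" unfolding matching_def disj_def by blast

lemma match_fin: "matching I Obj Om mu \<Longrightarrow> finite Obj \<Longrightarrow> i \<in> I \<Longrightarrow> finite (mu i)"
  unfolding matching_def by (meson finite_subset)

lemma cycle_len2:
  assumes "is_cycle I mu C" "cycle_pareto_improving I A mu C"
  shows "length C \<ge> 2"
proof (rule ccontr)
  assume "\<not> length C \<ge> 2"
  moreover have "C \<noteq> []" using assms unfolding is_cycle_def by blast
  then have "length C \<noteq> 0" by simp
  ultimately have l1: "length C = 1" by linarith
  have "\<And>i. apply_cycle mu C i = mu i"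
  proof -
    fix i show "apply_cycle mu C i = mu i"
    proof (cases "i \<in> fst ` set C")
      case False then show ?thesis by (rule apply_cycle_out)
    next
      case True
      then have i: "i = fst (C ! 0)" using l1 by (cases C) auto
      have d: "distinct (map fst C)" using l1 by (cases C) auto
      have "cyc_prev (length C) 0 = 0" using l1 unfolding cyc_prev_def by simp
      moreover have "snd (C ! 0) \<in> mu (fst (C ! 0))" using assms(1) l1 unfolding is_cycle_def by auto
      ultimately show ?thesis using apply_cycle_in[OF d, of 0 mu] i l1 by auto
    qed
  qed
  then show False using assms(2) unfolding cycle_pareto_improving_def by simp
qed

lemma tier_A: "x \<in> Ai \<Longrightarrow> tier Ai Bi x = 2" unfolding tier_def by simp
lemma tier_nA: "x \<notin> Ai \<Longrightarrow> tier Ai Bi x \<le> 1" unfolding tier_def by simp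
lemma tier_AB: "x \<in> Ai \<union> Bi \<Longrightarrow> tier Ai Bi x \<ge> 1" unfolding tier_def by auto
lemma tier_le2: "tier Ai Bi x \<le> 2" unfolding tier_def by simp

lemma dir1:
  assumes ec: "economy I Obj Om" and m: "matching I Obj Om mu"
    and c: "is_cycle I mu C" "cycle_cw_IR A B C" "cycle_pareto_improving I A mu C"
  shows "\<not> unambiguously_efficient I Obj Om (induced A B) mu"
proof -
  have fO: "finite Obj" using econ_finite[OF ec] .
  have dj: "disj I mu" using match_disj[OF m] .
  have fm: "\<forall>i\<in>I. finite (mu i)" using match_fin[OF m fO] by blast
  have l2: "length C \<ge> 2" using cycle_len2[OF c(1,3)] .
  note R12 = cpi_char[OF c(1) l2 dj fm, of A, THEN iffD1, OF c(3)]
  define R where "R = (\<lambda>i X Y. sum (tier (A i) (B i)) Y \<le> sum (tier (A i) (B i)) X)"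
  define mu' where "mu' = apply_cycle mu C"
  have pref: "\<forall>i\<in>I. preference_on (consumption Obj (card (Om i))) (R i)
               \<and> responsive Obj (consumption Obj (card (Om i))) (R i) (induced A B i)"
  proof
    fix i assume "i \<in> I"
    show "preference_on (consumption Obj (card (Om i))) (R i)
               \<and> responsive Obj (consumption Obj (card (Om i))) (R i) (induced A B i)"
    proof
      show "preference_on (consumption Obj (card (Om i))) (R i)"
        unfolding preference_on_def R_def by auto
      show "responsive Obj (consumption Obj (card (Om i))) (R i) (induced A B i)"
        unfolding responsive_def
      proof (intro ballI impI)
        fix x y Q assume h: "x \<in> Obj" "y \<in> Obj" "Q \<in> consumption Obj (card (Om i))" "x \<in> Q" "y \<notin> Q"
        have "finite Q" using h(3) fO unfolding consumption_def by (auto intro: finite_subset)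
        then have "int (sum (tier (A i) (B i)) (Q - {x} \<union> {y})) = int (sum (tier (A i) (B i)) Q) - int (tier (A i) (B i) x) + int (tier (A i) (B i) y)"
          using sum_swap[of Q x y] h(4,5) by blast
        then show "R i Q (Q - {x} \<union> {y}) = induced A B i x y"
          unfolding R_def induced_def by linarith
      qed
    qed
  qed
  have mm: "matching I Obj Om mu'" unfolding mu'_def using apply_matching[OF m c(1) l2 fO] .
  have su: "\<And>k. k < length C \<Longrightarrow> int (sum (tier (A (fst (C ! k))) (B (fst (C ! k)))) (mu' (fst (C ! k))))
      = int (sum (tier (A (fst (C ! k))) (B (fst (C ! k)))) (mu (fst (C ! k))))
        - int (tier (A (fst (C ! k))) (B (fst (C ! k))) (snd (C ! cyc_prev (length C) k)))
        + int (tier (A (fst (C ! k))) (B (fst (C ! k))) (snd (C ! k)))"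
  proof -
    fix k assume k: "k < length C"
    note ak = apply_cycle_k[OF c(1) l2 dj k]
    have fk: "finite (mu (fst (C ! k)))" using fm ak(4) by blast
    show "?thesis k" unfolding mu'_def ak(1) by (rule sum_swap[OF fk ak(2,3)])
  qed
  have weak: "\<forall>i\<in>I. R i (mu' i) (mu i)"
  proof
    fix i assume i: "i \<in> I"
    show "R i (mu' i) (mu i)"
    proof (cases "i \<in> fst ` set C")
      case False then show ?thesis unfolding mu'_def R_def using apply_cycle_out[OF False] by simp
    next
      case True
      then obtain k where k: "k < length C" "i = fst (C ! k)" by (auto simp: in_set_conv_nth)
      have ab: "snd (C ! k) \<in> A i \<union> B i" using c(2) k unfolding cycle_cw_IR_def by auto
      have aa: "snd (C ! cyc_prev (length C) k) \<in> A i \<longrightarrow> snd (C ! k) \<in> A i" using R12 k by blast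
      have "tier (A i) (B i) (snd (C ! cyc_prev (length C) k)) \<le> tier (A i) (B i) (snd (C ! k))"
      proof (cases "snd (C ! k) \<in> A i")
        case True then show ?thesis using tier_A[OF True, of "B i"] tier_le2[of "A i" "B i"] by simp
      next
        case False
        then have "snd (C ! cyc_prev (length C) k) \<notin> A i" using aa by blast
        then show ?thesis using tier_nA[of _ "A i" "B i"] tier_AB[OF ab] by (meson order_trans)
      qed
      then show ?thesis using su[OF k(1), folded k(2)] unfolding R_def by linarith
    qed
  qed
  have strict: "\<exists>i\<in>I. strict (R i) (mu' i) (mu i)"
  proof -
    obtain k where k: "k < length C" "snd (C ! k) \<in> A (fst (C ! k))" "snd (C ! cyc_prev (length C) k) \<notin> A (fst (C ! k))"
      using R12 by blast
    have "fst (C ! k) \<in> I" using apply_cycle_k(4)[OF c(1) l2 dj k(1)] .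
    moreover have "tier (A (fst (C ! k))) (B (fst (C ! k))) (snd (C ! cyc_prev (length C) k)) < tier (A (fst (C ! k))) (B (fst (C ! k))) (snd (C ! k))"
      using tier_A[OF k(2), of "B (fst (C ! k))"] tier_nA[OF k(3), of "B (fst (C ! k))"] by simp
    ultimately have "sum (tier (A (fst (C ! k))) (B (fst (C ! k)))) (mu' (fst (C ! k)))
       > sum (tier (A (fst (C ! k))) (B (fst (C ! k)))) (mu (fst (C ! k)))"
      using su[OF k(1)] by linarith
    then have "strict (R (fst (C ! k))) (mu' (fst (C ! k))) (mu (fst (C ! k)))"
      unfolding strict_def R_def by simp
    then show ?thesis using \<open>fst (C ! k) \<in> I\<close> by blast
  qed
  have "\<not> pareto_efficient I Obj Om R mu"
    unfolding pareto_efficient_def pareto_improves_def using mm weak strict by blast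
  then show ?thesis unfolding unambiguously_efficient_def using pref by blast
qed


lemma cnt_split:
  assumes "finite X"
  shows "card (X \<inter> U) = card (X \<inter> Y \<inter> U) + card ((X - Y) \<inter> U)"
proof -
  have "X \<inter> U = (X \<inter> Y \<inter> U) \<union> ((X - Y) \<inter> U)" by blast
  moreover have "(X \<inter> Y \<inter> U) \<inter> ((X - Y) \<inter> U) = {}" by blast
  ultimately show ?thesis using assms card_Un_disjoint[of "X \<inter> Y \<inter> U" "(X - Y) \<inter> U"] by auto
qed

lemma cnt_split2:
  assumes "finite Y"
  shows "card (Y \<inter> U) = card (X \<inter> Y \<inter> U) + card ((Y - X) \<inter> U)"
proof -
  have "X \<inter> Y \<inter> U = Y \<inter> X \<inter> U" by blast
  then show ?thesis using cnt_split[OF assms, where U=U and Y=X] by simp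
qed

lemma dominance:
  fixes t :: "'x \<Rightarrow> nat"
  assumes pref: "preference_on Xs R" and resp: "responsive Obj Xs R (\<lambda>x y. t y \<le> t x)"
    and Xs: "Xs = consumption Obj k" and fO: "finite Obj"
  shows "card (X - Y) = n \<Longrightarrow> X \<in> Xs \<Longrightarrow> Y \<in> Xs \<Longrightarrow>
     (\<forall>s. card (X \<inter> {z. s \<le> t z}) \<le> card (Y \<inter> {z. s \<le> t z})) \<Longrightarrow>
     R Y X \<and> ((\<exists>s. card (X \<inter> {z. s \<le> t z}) < card (Y \<inter> {z. s \<le> t z})) \<longrightarrow> \<not> R X Y)"
proof (induction n arbitrary: X)
  case 0
  have fX: "finite X" "finite Y" using 0(2,3) fO unfolding Xs consumption_def by (auto intro: finite_subset)
  have "X \<subseteq> Y" using 0(1) fX by auto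
  moreover have "card X = card Y" using 0(2,3) unfolding Xs consumption_def by simp
  ultimately have "X = Y" using fX card_subset_eq by blast
  then show ?case using pref 0(3) unfolding preference_on_def by auto
next
  case (Suc n)
  let ?U = "\<lambda>s. {z. s \<le> t z}"
  have fX: "finite X" "finite Y" using Suc(3,4) fO unfolding Xs consumption_def by (auto intro: finite_subset)
  have cXY: "card X = card Y" using Suc(3,4) unfolding Xs consumption_def by simp
  have XO: "X \<subseteq> Obj" "Y \<subseteq> Obj" using Suc(3,4) unfolding Xs consumption_def by auto
  have cd: "card (X - Y) = card (Y - X)"
    using fX cXY by (simp add: card_Diff_subset_Int Int_commute)
  have ne: "X - Y \<noteq> {}" using Suc(2) by (metis card.empty nat.distinct(1))
  then have ne2: "Y - X \<noteq> {}" using cd fX by (metis card_0_eq finite_Diff)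
  obtain x where x: "x \<in> X - Y" "\<forall>z. z \<in> X - Y \<longrightarrow> t x \<le> t z"
    using ex_has_least_nat[of "\<lambda>z. z \<in> X - Y"] ne by blast
  obtain y where y: "y \<in> Y - X" "\<forall>z. z \<in> Y - X \<longrightarrow> t y \<le> t z"
    using ex_has_least_nat[of "\<lambda>z. z \<in> Y - X"] ne2 by blast
  have txy: "t x \<le> t y"
  proof (rule ccontr)
    assume "\<not> t x \<le> t y"
    let ?s = "t x"
    have a: "(X - Y) \<inter> ?U ?s = X - Y" using x by auto
    have b: "(Y - X) \<inter> ?U ?s \<subseteq> (Y - X) - {y}" using y \<open>\<not> t x \<le> t y\<close> by auto
    have fd: "finite (Y - X)" using fX by auto
    have "card ((Y - X) \<inter> ?U ?s) \<le> card ((Y - X) - {y})" using b fd by (meson card_mono finite_Diff)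
    also have "\<dots> < card (Y - X)" using y(1) fd by (meson card_Diff1_less)
    finally have "card ((Y - X) \<inter> ?U ?s) < card ((X - Y) \<inter> ?U ?s)" using a cd by simp
    then have "card (Y \<inter> ?U ?s) < card (X \<inter> ?U ?s)"
      using cnt_split[OF fX(1), where Y=Y and U="?U ?s"] cnt_split2[OF fX(2), where X=X and U="?U ?s"] by linarith
    then show False using Suc(5) by (meson not_le)
  qed
  define X' where "X' = X - {x} \<union> {y}"
  have xy: "x \<noteq> y" using x y by auto
  have X'Xs: "X' \<in> Xs"
  proof -
    have "X' \<subseteq> Obj" using XO x y unfolding X'_def by auto
    moreover have "card X' = card X" unfolding X'_def using x y fX
      by (simp add: card_insert_if) (metis card_Diff1_less card_gt_0_iff One_nat_def Suc_pred empty_iff DiffD1)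
    ultimately show ?thesis using Suc(3) unfolding Xs consumption_def by simp
  qed
  have X'Y: "X' - Y = (X - Y) - {x}" unfolding X'_def using y by auto
  have cX'Y: "card (X' - Y) = n" using Suc(2) x(1) fX unfolding X'Y by (simp add: card_Diff_singleton)
  have cnt: "\<And>s. int (card (X' \<inter> ?U s)) = int (card (X \<inter> ?U s)) - (if x \<in> ?U s then 1 else 0) + (if y \<in> ?U s then 1 else 0)"
    unfolding X'_def using card_swap[OF fX(1)] x y by auto
  have dom': "\<forall>s. card (X' \<inter> ?U s) \<le> card (Y \<inter> ?U s)"
  proof
    fix s
    show "card (X' \<inter> ?U s) \<le> card (Y \<inter> ?U s)"
    proof (cases "t x < s \<and> s \<le> t y")
      case False
      then have "int (card (X' \<inter> ?U s)) \<le> int (card (X \<inter> ?U s))" using cnt[of s] txy by auto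
      then show ?thesis using Suc(5) by (meson le_trans of_nat_le_iff)
    next
      case True
      have fd: "finite (X - Y)" using fX by auto
      have "(Y - X) \<inter> ?U s = Y - X" using y True by auto
      then have cY: "card (Y \<inter> ?U s) = card (X \<inter> Y \<inter> ?U s) + card (Y - X)"
        using cnt_split2[OF fX(2), where X=X and U="?U s"] by simp
      have "(X - Y) \<inter> ?U s \<subseteq> (X - Y) - {x}" using True x by auto
      then have "card ((X - Y) \<inter> ?U s) \<le> card ((X - Y) - {x})" using fd by (meson card_mono finite_Diff)
      also have "\<dots> < card (X - Y)" using x(1) fd by (meson card_Diff1_less)
      finally have "card (X \<inter> ?U s) < card (X \<inter> Y \<inter> ?U s) + card (X - Y)"
        using cnt_split[OF fX(1), where Y=Y and U="?U s"] by simp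
      then show ?thesis using cnt[of s] True txy cY cd by auto
    qed
  qed
  note IH = Suc(1)[OF cX'Y X'Xs Suc(4) dom']
  have xO: "x \<in> Obj" "y \<in> Obj" using XO x y by auto
  have bk: "X' - {y} \<union> {x} = X" unfolding X'_def using x y xy by auto
  have "y \<in> X'" "x \<notin> X'" unfolding X'_def using xy by auto
  then have "R X' (X' - {y} \<union> {x}) \<longleftrightarrow> t x \<le> t y"
    using resp xO X'Xs unfolding responsive_def by blast
  then have RX'X: "R X' X \<longleftrightarrow> t x \<le> t y" unfolding bk .
  have RXX': "R X X' \<longleftrightarrow> t y \<le> t x"
    using resp xO Suc(3) x y unfolding responsive_def X'_def by auto
  have trans: "\<And>P Q S. P \<in> Xs \<Longrightarrow> Q \<in> Xs \<Longrightarrow> S \<in> Xs \<Longrightarrow> R P Q \<Longrightarrow> R Q S \<Longrightarrow> R P S"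
    using pref unfolding preference_on_def by blast
  have "R Y X" using trans[OF Suc(4) X'Xs Suc(3)] IH RX'X txy by blast
  moreover have "(\<exists>s. card (X \<inter> ?U s) < card (Y \<inter> ?U s)) \<longrightarrow> \<not> R X Y"
  proof
    assume st: "\<exists>s. card (X \<inter> ?U s) < card (Y \<inter> ?U s)"
    show "\<not> R X Y"
    proof (cases "t x < t y")
      case True
      then show ?thesis using trans[OF Suc(3) Suc(4) X'Xs] IH RXX' by auto
    next
      case False
      then have "t x = t y" using txy by simp
      then have "\<forall>s. card (X' \<inter> ?U s) = card (X \<inter> ?U s)" using cnt by auto
      then have "\<not> R X' Y" using IH st by auto
      then show ?thesis using trans[OF X'Xs Suc(3) Suc(4)] RX'X txy by blast
    qed
  qed
  ultimately show ?case by blast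
qed


lemma econ_ne: "economy I Obj Om \<Longrightarrow> i \<in> I \<Longrightarrow> Om i \<noteq> {}"
  unfolding economy_def by simp

lemma econ_sub: "economy I Obj Om \<Longrightarrow> i \<in> I \<Longrightarrow> Om i \<subseteq> Obj"
  unfolding economy_def by (metis UN_upper)

lemma ab_sub: "AB_profile I Obj Om A B \<Longrightarrow> i \<in> I \<Longrightarrow> Om i \<subseteq> A i \<union> B i"
  unfolding AB_profile_def by simp

lemma match_card: "matching I Obj Om mu \<Longrightarrow> i \<in> I \<Longrightarrow> card (mu i) = card (Om i)"
  unfolding matching_def by simp

lemma match_sub: "matching I Obj Om mu \<Longrightarrow> i \<in> I \<Longrightarrow> mu i \<subseteq> Obj"
  unfolding matching_def by simp

lemma cwIR_sub:
  assumes ec: "economy I Obj Om" and ab: "AB_profile I Obj Om A B" and m: "matching I Obj Om mu"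
    and cw: "cw_IR I Om (induced A B) mu" and j: "j \<in> I"
  shows "mu j \<subseteq> A j \<union> B j"
proof -
  have fO: "finite Obj" using econ_finite[OF ec] .
  have OmO: "Om j \<subseteq> Obj" using econ_sub[OF ec j] .
  have fOm: "finite (Om j)" using OmO fO finite_subset by blast
  have fmu: "finite (mu j)" using match_fin[OF m fO j] .
  have ne: "Om j \<noteq> {}" using econ_ne[OF ec j] .
  have OmAB: "Om j \<subseteq> A j \<union> B j" using ab_sub[OF ab j] .
  have cc: "card (mu j) = card (Om j)" using match_card[OF m j] .
  obtain w where w: "w \<in> Om j" "\<forall>z\<in>Om j. tier (A j) (B j) w \<le> tier (A j) (B j) z"
  proof -
    obtain k where "k \<in> Om j" using ne by blast
    from ex_has_least_nat[of "\<lambda>z. z \<in> Om j", OF this, of "tier (A j) (B j)"]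
    show ?thesis using that by blast
  qed
  have "{x\<in>Om j. induced A B j x w} = Om j" using w(2) unfolding induced_def by auto
  moreover have "card {x\<in>mu j. induced A B j x w} \<ge> card {x\<in>Om j. induced A B j x w}"
    using cw[unfolded cw_IR_def, rule_format, OF j w(1)] .
  ultimately have "card {x\<in>mu j. induced A B j x w} \<ge> card (mu j)" using cc by simp
  moreover have "{x\<in>mu j. induced A B j x w} \<subseteq> mu j" by blast
  ultimately have "{x\<in>mu j. induced A B j x w} = mu j" using card_seteq[OF fmu] by blast
  then have "\<forall>x\<in>mu j. tier (A j) (B j) w \<le> tier (A j) (B j) x" unfolding induced_def by blast
  moreover have "tier (A j) (B j) w \<ge> 1" using tier_AB[OF subsetD[OF OmAB w(1)]] .
  ultimately have "\<forall>x\<in>mu j. tier (A j) (B j) x \<ge> 1" by (meson order_trans)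
  then show ?thesis unfolding tier_def by (auto split: if_splits)
qed


lemma U_cases:
  "X \<inter> {z. s \<le> tier Ai Bi z} = (if s = 0 then X else if s = 1 then X \<inter> (Ai \<union> Bi) else if s = 2 then X \<inter> Ai else {})"
  unfolding tier_def by auto

lemma dom_cond:
  assumes "card X = card Y" "card (X \<inter> (Ai \<union> Bi)) \<le> card (Y \<inter> (Ai \<union> Bi))" "card (X \<inter> Ai) \<le> card (Y \<inter> Ai)"
  shows "\<forall>s. card (X \<inter> {z. s \<le> tier Ai Bi z}) \<le> card (Y \<inter> {z. s \<le> tier Ai Bi z})"
  using assms by (simp add: U_cases)

lemma dom_strict:
  assumes "card (X \<inter> (Ai \<union> Bi)) < card (Y \<inter> (Ai \<union> Bi)) \<or> card (X \<inter> Ai) < card (Y \<inter> Ai)"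
  shows "\<exists>s. card (X \<inter> {z. s \<le> tier Ai Bi z}) < card (Y \<inter> {z. s \<le> tier Ai Bi z})"
  using assms
proof
  assume "card (X \<inter> (Ai \<union> Bi)) < card (Y \<inter> (Ai \<union> Bi))"
  then show ?thesis by (intro exI[of _ 1]) (simp add: U_cases)
next
  assume "card (X \<inter> Ai) < card (Y \<inter> Ai)"
  then show ?thesis by (intro exI[of _ 2]) (simp add: U_cases)
qed

lemma agent_pref:
  assumes pref: "preference_on Xs R" and resp: "responsive Obj Xs R (induced A B j)"
    and Xs: "Xs = consumption Obj k" and fO: "finite Obj"
    and X: "X \<in> Xs" and Y: "Y \<in> Xs" and sub: "X \<subseteq> A j \<union> B j" and RYX: "R Y X"
  shows "card (X \<inter> A j) \<le> card (Y \<inter> A j)"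
    and "card (X \<inter> A j) = card (Y \<inter> A j) \<Longrightarrow> Y \<subseteq> A j \<union> B j"
    and "\<not> R X Y \<Longrightarrow> card (X \<inter> A j) < card (Y \<inter> A j)"
proof -
  have ind: "induced A B j = (\<lambda>x y. tier (A j) (B j) y \<le> tier (A j) (B j) x)"
    unfolding induced_def by (intro ext) simp
  note D = dominance[OF pref resp[unfolded ind] Xs fO, OF refl]
  have fX: "finite X" "finite Y" using X Y fO unfolding Xs consumption_def by (auto intro: finite_subset)
  have cXY: "card X = card Y" using X Y unfolding Xs consumption_def by simp
  have cXAB: "card (X \<inter> (A j \<union> B j)) = card X" using sub by (simp add: Int_absorb2)
  have cYAB: "card (Y \<inter> (A j \<union> B j)) \<le> card Y" using fX by (simp add: card_mono)
  have main: "card (X \<inter> A j) \<le> card (Y \<inter> A j) \<and> (card (X \<inter> A j) = card (Y \<inter> A j) \<longrightarrow> Y \<subseteq> A j \<union> B j)"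
  proof (rule ccontr)
    assume nc: "\<not> ?thesis"
    have strict: "card (Y \<inter> (A j \<union> B j)) < card (X \<inter> (A j \<union> B j)) \<or> card (Y \<inter> A j) < card (X \<inter> A j)"
    proof (cases "card (Y \<inter> A j) < card (X \<inter> A j)")
      case True then show ?thesis by blast
    next
      case False
      then have "\<not> Y \<subseteq> A j \<union> B j" using nc by linarith
      then have "Y \<inter> (A j \<union> B j) \<subset> Y" by blast
      then have "card (Y \<inter> (A j \<union> B j)) < card Y" using fX(2) by (meson psubset_card_mono)
      then show ?thesis using cXAB cXY by linarith
    qed
    have le: "card (Y \<inter> A j) \<le> card (X \<inter> A j)" using strict nc by linarith
    have "\<not> R Y X"
      using D[of Y X, OF Y X dom_cond[OF cXY[symmetric] _ le]] dom_strict[OF strict] cXAB cXY cYAB by auto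
    then show False using RYX by blast
  qed
  then show "card (X \<inter> A j) \<le> card (Y \<inter> A j)" "card (X \<inter> A j) = card (Y \<inter> A j) \<Longrightarrow> Y \<subseteq> A j \<union> B j"
    by blast+
  show "\<not> R X Y \<Longrightarrow> card (X \<inter> A j) < card (Y \<inter> A j)"
  proof (rule ccontr)
    assume nR: "\<not> R X Y" and nl: "\<not> card (X \<inter> A j) < card (Y \<inter> A j)"
    then have eq: "card (X \<inter> A j) = card (Y \<inter> A j)" using main by linarith
    then have "Y \<subseteq> A j \<union> B j" using main by blast
    then have "card (Y \<inter> (A j \<union> B j)) = card Y" by (simp add: Int_absorb2)
    then have "R X Y" using D[of Y X, OF Y X dom_cond] eq cXAB cXY by auto
    then show False using nR by blast
  qed
qed


lemma cover:
  assumes ec: "economy I Obj Om" and m: "matching I Obj Om mu"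
  shows "(\<Union>i\<in>I. mu i) = Obj"
proof -
  have fI: "finite I" using ec unfolding economy_def by simp
  have fO: "finite Obj" using econ_finite[OF ec] .
  have sub: "(\<Union>i\<in>I. mu i) \<subseteq> Obj" using match_sub[OF m] by blast
  have fm: "\<forall>i\<in>I. finite (mu i)" using match_fin[OF m fO] by blast
  have fOm: "\<forall>i\<in>I. finite (Om i)" using econ_sub[OF ec] fO finite_subset by blast
  have dOm: "\<forall>i\<in>I. \<forall>j\<in>I. i \<noteq> j \<longrightarrow> Om i \<inter> Om j = {}" using ec unfolding economy_def by simp
  have dmu: "\<forall>i\<in>I. \<forall>j\<in>I. i \<noteq> j \<longrightarrow> mu i \<inter> mu j = {}" using m unfolding matching_def by simp
  have uOm: "(\<Union>i\<in>I. Om i) = Obj" using ec unfolding economy_def by simp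
  have "card (\<Union>i\<in>I. mu i) = (\<Sum>i\<in>I. card (mu i))" using card_UN_disjoint[OF fI] fm dmu by blast
  also have "\<dots> = (\<Sum>i\<in>I. card (Om i))" using match_card[OF m] by simp
  also have "\<dots> = card (\<Union>i\<in>I. Om i)" using card_UN_disjoint[OF fI] fOm dOm by metis
  finally have "card (\<Union>i\<in>I. mu i) = card Obj" using uOm by simp
  then show ?thesis using sub fO card_subset_eq by blast
qed

lemma adj_snoc: "V \<noteq> [] \<Longrightarrow> adj (V @ [c]) = adj V \<union> {(last V, c)}"
  unfolding adj_def using zip_snoc_aux[of V c] by (cases V) auto

lemma adj_single: "adj [a] = {}" unfolding adj_def by simp

lemma path_of_rtrancl:
  assumes "(a, b) \<in> R\<^sup>*"
  shows "\<exists>ys. ys \<noteq> [] \<and> hd ys = a \<and> last ys = b \<and> adj ys \<subseteq> R \<and> set ys \<subseteq> insert a (snd ` R)"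
  using assms
proof (induction rule: rtrancl_induct)
  case base
  show ?case by (intro exI[of _ "[a]"]) (simp add: adj_single)
next
  case (step y z)
  then obtain ys where ys: "ys \<noteq> []" "hd ys = a" "last ys = y" "adj ys \<subseteq> R" "set ys \<subseteq> insert a (snd ` R)"
    by blast
  have "z \<in> snd ` R" using step(2) by force
  then show ?case using ys step(2) adj_snoc[OF ys(1), of z]
    by (intro exI[of _ "ys @ [z]"]) auto
qed


lemma key:
  fixes I :: "'i set" and mu mu' A B :: "'i \<Rightarrow> 'x set"
  assumes fI: "finite I" and fO: "finite Obj"
    and dmu: "\<forall>i\<in>I. \<forall>j\<in>I. i \<noteq> j \<longrightarrow> mu i \<inter> mu j = {}"
    and dmu': "\<forall>i\<in>I. \<forall>j\<in>I. i \<noteq> j \<longrightarrow> mu' i \<inter> mu' j = {}"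
    and sub: "\<forall>i\<in>I. mu i \<subseteq> Obj" and sub': "\<forall>i\<in>I. mu' i \<subseteq> Obj"
    and cov: "(\<Union>i\<in>I. mu i) = Obj"
    and cd: "\<forall>i\<in>I. card (mu' i) = card (mu i)"
    and F1: "\<forall>j\<in>I. card (mu j \<inter> A j) \<le> card (mu' j \<inter> A j)"
    and F2: "\<forall>j\<in>I. card (mu j \<inter> A j) = card (mu' j \<inter> A j) \<longrightarrow> mu' j \<subseteq> A j \<union> B j"
    and F3: "\<exists>j\<in>I. card (mu j \<inter> A j) < card (mu' j \<inter> A j)"
    and Er: "Er = {(g,r). \<exists>j\<in>I. g \<in> mu j - mu' j \<and> r \<in> mu' j - mu j \<and> r \<in> A j \<union> B j \<and> (g \<in> A j \<longrightarrow> r \<in> A j)}"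
  shows "\<exists>j g r. j \<in> I \<and> g \<in> mu j - mu' j \<and> r \<in> mu' j - mu j \<and> r \<in> A j \<and> g \<notin> A j \<and> (r, g) \<in> Er\<^sup>*"
proof (rule ccontr)
  assume nex: "\<not> ?thesis"
  have fm: "\<forall>i\<in>I. finite (mu i)" "\<forall>i\<in>I. finite (mu' i)"
    using sub sub' fO by (meson finite_subset)+
  define outs where "outs j = mu j - mu' j" for j
  define ins where "ins j = mu' j - mu j" for j
  have cio: "\<And>j. j \<in> I \<Longrightarrow> card (ins j) = card (outs j)"
    unfolding ins_def outs_def using fm cd by (simp add: card_Diff_subset_Int Int_commute)
  have splA: "\<And>j S. j \<in> I \<Longrightarrow> card (mu j \<inter> S) = card (mu j \<inter> mu' j \<inter> S) + card (outs j \<inter> S)"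
  proof -
    fix j S assume "j \<in> I"
    then have "finite (mu j)" using fm by blast
    then show "?thesis j S" unfolding outs_def by (rule cnt_split)
  qed
  have splA': "\<And>j S. j \<in> I \<Longrightarrow> card (mu' j \<inter> S) = card (mu j \<inter> mu' j \<inter> S) + card (ins j \<inter> S)"
  proof -
    fix j S assume "j \<in> I"
    then have "finite (mu' j)" using fm by blast
    then show "?thesis j S" unfolding ins_def by (rule cnt_split2)
  qed
  have inoutA: "\<And>j. j \<in> I \<Longrightarrow> card (outs j \<inter> A j) \<le> card (ins j \<inter> A j)"
  proof -
    fix j assume j: "j \<in> I"
    show "?thesis j" using F1 j splA[OF j, of "A j"] splA'[OF j, of "A j"] by auto
  qed
  have inoutAs: "\<And>j. j \<in> I \<Longrightarrow> card (mu j \<inter> A j) < card (mu' j \<inter> A j) \<Longrightarrow> card (outs j \<inter> A j) < card (ins j \<inter> A j)"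
  proof -
    fix j assume j: "j \<in> I" "card (mu j \<inter> A j) < card (mu' j \<inter> A j)"
    show "card (outs j \<inter> A j) < card (ins j \<inter> A j)" using j(2) splA[OF j(1), of "A j"] splA'[OF j(1), of "A j"] by linarith
  qed
  define imp where "imp j \<longleftrightarrow> card (mu j \<inter> A j) < card (mu' j \<inter> A j)" for j
  define IE where "IE = {(g,r,j). j \<in> I \<and> imp j \<and> g \<in> outs j \<and> r \<in> ins j \<and> r \<in> A j \<and> g \<notin> A j}"
  define F where "F r = {x. (r, x) \<in> Er\<^sup>*}" for r
  have Ersnd: "\<And>g r. (g, r) \<in> Er \<Longrightarrow> \<exists>j\<in>I. r \<in> ins j" unfolding Er ins_def by blast
  have Erfst: "\<And>g r. (g, r) \<in> Er \<Longrightarrow> \<exists>j\<in>I. g \<in> outs j" unfolding Er outs_def by blast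
  have Ermk: "\<And>j g r. j \<in> I \<Longrightarrow> g \<in> outs j \<Longrightarrow> r \<in> ins j \<Longrightarrow> r \<in> A j \<union> B j \<Longrightarrow> (g \<in> A j \<longrightarrow> r \<in> A j) \<Longrightarrow> (g, r) \<in> Er"
    unfolding Er ins_def outs_def by blast
  have insO: "\<And>j. j \<in> I \<Longrightarrow> ins j \<subseteq> Obj" unfolding ins_def using sub' by blast
  have Fsub: "\<And>r x. x \<in> F r \<Longrightarrow> x = r \<or> (\<exists>j\<in>I. x \<in> ins j)"
  proof -
    fix r x assume "x \<in> F r"
    then have "(r, x) \<in> Er\<^sup>*" unfolding F_def by simp
    then show "x = r \<or> (\<exists>j\<in>I. x \<in> ins j)"
      by (cases rule: rtranclE) (auto dest: Ersnd)
  qed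
  have finF: "\<And>r. finite (F r)"
  proof -
    fix r
    have "F r \<subseteq> insert r Obj" using Fsub insO by blast
    then show "finite (F r)" using fO finite_subset by blast
  qed
  obtain j0 where j0: "j0 \<in> I" "imp j0" using F3 unfolding imp_def by blast
  have "ins j0 \<inter> A j0 \<noteq> {}" using inoutAs[OF j0(1)] j0(2) unfolding imp_def by fastforce
  then obtain r0 where r0: "r0 \<in> ins j0" "r0 \<in> A j0" by blast
  have "outs j0 - A j0 \<noteq> {}"
  proof
    assume "outs j0 - A j0 = {}"
    then have "outs j0 \<inter> A j0 = outs j0" by blast
    moreover have "card (ins j0 \<inter> A j0) \<le> card (ins j0)" using fm j0(1) unfolding ins_def by (simp add: card_mono)
    ultimately show False using inoutAs[OF j0(1)] j0(2) cio[OF j0(1)] unfolding imp_def by simp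
  qed
  then obtain g0 where g0: "g0 \<in> outs j0" "g0 \<notin> A j0" by blast
  have IEne: "(g0, r0, j0) \<in> IE" unfolding IE_def using j0 r0 g0 by simp
  obtain t where t: "t \<in> IE" "\<forall>u. u \<in> IE \<longrightarrow> card (F (fst (snd t))) \<le> card (F (fst (snd u)))"
    using ex_has_least_nat[of "\<lambda>u. u \<in> IE", OF IEne, of "\<lambda>u. card (F (fst (snd u)))"] by blast
  obtain gs rs js where tt: "t = (gs, rs, js)" by (cases t) auto
  have ts: "js \<in> I" "imp js" "gs \<in> outs js" "rs \<in> ins js" "rs \<in> A js" "gs \<notin> A js"
    using t(1) unfolding tt IE_def by auto
  define Fs where "Fs = F rs"
  have rsF: "rs \<in> Fs" unfolding Fs_def F_def by simp
  have H: "\<And>g r j. (g, r, j) \<in> IE \<Longrightarrow> g \<notin> Fs"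
  proof
    fix g r j assume ie: "(g, r, j) \<in> IE" and gF: "g \<in> Fs"
    have iej: "j \<in> I" "g \<in> outs j" "r \<in> ins j" "r \<in> A j" "g \<notin> A j" using ie unfolding IE_def by auto
    have gr: "(g, r) \<in> Er" using Ermk[OF iej(1-3)] iej(4,5) by blast
    have sub1: "F r \<subseteq> Fs"
    proof
      fix x assume "x \<in> F r"
      then have "(r, x) \<in> Er\<^sup>*" unfolding F_def by simp
      moreover have "(rs, r) \<in> Er\<^sup>*" using gF gr unfolding Fs_def F_def by simp
      ultimately show "x \<in> Fs" unfolding Fs_def F_def by simp
    qed
    have "card Fs \<le> card (F r)" using t(2) ie unfolding tt Fs_def by fastforce
    then have "F r = Fs" using sub1 finF card_subset_eq unfolding Fs_def by (metis le_antisym card_mono)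
    then have "rs \<in> F r" using rsF by simp
    then have "(r, rs) \<in> Er\<^sup>*" unfolding F_def by simp
    moreover have "(rs, g) \<in> Er\<^sup>*" using gF unfolding Fs_def F_def by simp
    ultimately have "(r, g) \<in> Er\<^sup>*" by simp
    then show False using nex iej unfolding ins_def outs_def by blast
  qed
  have Fins: "Fs \<subseteq> (\<Union>j\<in>I. ins j)" using Fsub[of _ rs] ts(1,4) unfolding Fs_def by blast
  have insouts: "(\<Union>j\<in>I. ins j) \<subseteq> (\<Union>j\<in>I. outs j)"
  proof
    fix x assume "x \<in> (\<Union>j\<in>I. ins j)"
    then obtain j where j: "j \<in> I" "x \<in> mu' j" "x \<notin> mu j" unfolding ins_def by blast
    then have "x \<in> Obj" using sub' by blast
    then obtain k where k: "k \<in> I" "x \<in> mu k" using cov by blast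
    then have "k \<noteq> j" using j by blast
    then have "x \<notin> mu' k" using dmu' j k by blast
    then show "x \<in> (\<Union>j\<in>I. outs j)" using k unfolding outs_def by blast
  qed
  have dins: "\<forall>i\<in>I. \<forall>j\<in>I. i \<noteq> j \<longrightarrow> (Fs \<inter> ins i) \<inter> (Fs \<inter> ins j) = {}"
    using dmu' unfolding ins_def by blast
  have douts: "\<forall>i\<in>I. \<forall>j\<in>I. i \<noteq> j \<longrightarrow> (Fs \<inter> outs i) \<inter> (Fs \<inter> outs j) = {}"
    using dmu unfolding outs_def by blast
  have finFs: "finite Fs" unfolding Fs_def using finF .
  have uin: "(\<Union>j\<in>I. Fs \<inter> ins j) = Fs" using Fins by blast
  have uout: "(\<Union>j\<in>I. Fs \<inter> outs j) = Fs" using Fins insouts by blast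
  have s1: "card Fs = (\<Sum>j\<in>I. card (Fs \<inter> ins j))"
    using card_UN_disjoint[OF fI, of "\<lambda>j. Fs \<inter> ins j"] finFs dins uin by simp
  have s2: "card Fs = (\<Sum>j\<in>I. card (Fs \<inter> outs j))"
    using card_UN_disjoint[OF fI, of "\<lambda>j. Fs \<inter> outs j"] finFs douts uout by simp
  have reachF: "\<And>g r. g \<in> Fs \<Longrightarrow> (g, r) \<in> Er \<Longrightarrow> r \<in> Fs"
    unfolding Fs_def F_def by (simp add: rtrancl_into_rtrancl)
  have finio: "\<And>j. j \<in> I \<Longrightarrow> finite (ins j) \<and> finite (outs j)" unfolding ins_def outs_def using fm by blast
  have per: "\<And>j. j \<in> I \<Longrightarrow> card (Fs \<inter> outs j) \<le> card (Fs \<inter> ins j) \<and> (j = js \<longrightarrow> card (Fs \<inter> outs j) < card (Fs \<inter> ins j))"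
  proof -
    fix j assume j: "j \<in> I"
    have fi: "finite (ins j)" "finite (outs j)" using finio[OF j] by blast+
    show "card (Fs \<inter> outs j) \<le> card (Fs \<inter> ins j) \<and> (j = js \<longrightarrow> card (Fs \<inter> outs j) < card (Fs \<inter> ins j))"
    proof (cases "\<exists>g \<in> Fs \<inter> outs j. g \<notin> A j")
      case True
      then obtain g where g: "g \<in> Fs" "g \<in> outs j" "g \<notin> A j" by blast
      have nimp: "\<not> imp j"
      proof
        assume ij: "imp j"
        have "ins j \<inter> A j \<noteq> {}" using inoutAs[OF j] ij unfolding imp_def by fastforce
        then obtain r where "r \<in> ins j" "r \<in> A j" by blast
        then have "(g, r, j) \<in> IE" unfolding IE_def using j ij g by simp
        then show False using H g(1) by blast
      qed
      then have "mu' j \<subseteq> A j \<union> B j" using F1 F2 j unfolding imp_def by (meson le_neq_implies_less)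
      then have "ins j \<subseteq> Fs" using reachF[OF g(1)] Ermk[OF j g(2)] g(3) unfolding ins_def by blast
      then have "card (Fs \<inter> ins j) = card (ins j)" by (simp add: Int_absorb1)
      moreover have "card (Fs \<inter> outs j) \<le> card (outs j)" using fi by (simp add: card_mono)
      moreover have "j \<noteq> js" using nimp ts(2) by blast
      ultimately show ?thesis using cio[OF j] by simp
    next
      case False
      show ?thesis
      proof (cases "Fs \<inter> outs j = {}")
        case True
        have "j = js \<Longrightarrow> Fs \<inter> ins j \<noteq> {}" using rsF ts(4) by blast
        then have "j = js \<Longrightarrow> card (Fs \<inter> ins j) > 0" using fi by (simp add: card_gt_0_iff)
        then show ?thesis using True by auto
      next
        case ne: False
        then obtain g where g: "g \<in> Fs" "g \<in> outs j" by blast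
        have gA: "g \<in> A j" using False g by blast
        have "ins j \<inter> A j \<subseteq> Fs" using reachF[OF g(1)] Ermk[OF j g(2)] by blast
        then have c1: "card (ins j \<inter> A j) \<le> card (Fs \<inter> ins j)" using finFs
          by (metis Int_commute Int_lower2 card_mono finite_Int le_infI)
        have "Fs \<inter> outs j \<subseteq> outs j \<inter> A j" using False by blast
        then have c2: "card (Fs \<inter> outs j) \<le> card (outs j \<inter> A j)" using fi by (simp add: card_mono)
        have "j = js \<Longrightarrow> card (outs j \<inter> A j) < card (ins j \<inter> A j)"
          using inoutAs[OF j] ts(2) unfolding imp_def by blast
        then show ?thesis using c1 c2 inoutA[OF j] by fastforce
      qed
    qed
  qed
  have "(\<Sum>j\<in>I. card (Fs \<inter> outs j)) < (\<Sum>j\<in>I. card (Fs \<inter> ins j))"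
    using sum_strict_mono_ex1[OF fI, of "\<lambda>j. card (Fs \<inter> outs j)" "\<lambda>j. card (Fs \<inter> ins j)"] per ts(1) by blast
  then show False using s1 s2 by simp
qed


lemma own_eq:
  assumes "disj I mu" "j \<in> I" "x \<in> mu j"
  shows "(THE j. j \<in> I \<and> x \<in> mu j) = j"
  using assms unfolding disj_def by (intro the_equality) blast+

lemma suc_cyc_prev: "k < L \<Longrightarrow> Suc (cyc_prev L k) mod L = k"
  unfolding cyc_prev_def
proof -
  assume k: "k < L"
  show "Suc ((k + L - 1) mod L) mod L = k"
  proof (cases k)
    case 0
    then have "(k + L - 1) mod L = L - 1" using k by simp
    then show ?thesis using k 0 by simp
  next
    case (Suc m)
    then have "(k + L - 1) mod L = m" using k by simp
    then show ?thesis using k Suc by simp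
  qed
qed

lemma walk_to_cycle:
  fixes own :: "'x \<Rightarrow> 'i"
  assumes dj: "disj I mu" and ow: "\<forall>x\<in>set zs. own x \<in> I \<and> x \<in> mu (own x)"
    and w: "walkok A B own zs" and d: "distinct (map own zs)" and fm: "\<forall>i\<in>I. finite (mu i)"
  shows "\<exists>C. is_cycle I mu C \<and> cycle_cw_IR A B C \<and> cycle_pareto_improving I A mu C"
proof -
  define L where "L = length zs"
  have ne: "zs \<noteq> []" using w unfolding walkok_def by blast
  have L0: "L > 0" using ne unfolding L_def by simp
  have cpz: "cp zs = {(zs ! k, zs ! (Suc k mod L)) | k. k < L}" unfolding L_def by (rule cp_nth)
  have ev: "\<And>k. k < L \<Longrightarrow> Ev A B own (zs ! k, zs ! (Suc k mod L))"
    using w cpz unfolding walkok_def by blast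
  obtain p where p: "p \<in> cp zs" "Imp A own p" using w unfolding walkok_def by blast
  then obtain k0 where k0: "k0 < L" "Imp A own (zs ! k0, zs ! (Suc k0 mod L))"
    using cpz by auto
  have L2: "L \<ge> 2"
  proof (rule ccontr)
    assume "\<not> L \<ge> 2"
    then have "L = 1" using L0 by linarith
    then have "Suc k0 mod L = k0" using k0(1) by simp
    then show False using k0(2) unfolding Imp_def by simp
  qed
  have owk: "\<And>k. k < L \<Longrightarrow> own (zs ! k) \<in> I \<and> zs ! k \<in> mu (own (zs ! k))"
    using ow unfolding L_def by (meson nth_mem)
  have dz: "distinct zs" using d by (simp add: distinct_map)
  have smod: "\<And>k. k < L \<Longrightarrow> Suc k mod L < L" using smod_lt by blast
  have sneq: "\<And>k. k < L \<Longrightarrow> Suc k mod L \<noteq> k"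
  proof -
    fix k assume k: "k < L"
    show "Suc k mod L \<noteq> k"
    proof (cases "Suc k < L")
      case True then show ?thesis by simp
    next
      case False then have "Suc k = L" using k by simp
      then show ?thesis using L2 by simp
    qed
  qed
  have ownne: "\<And>k. k < L \<Longrightarrow> own (zs ! (Suc k mod L)) \<noteq> own (zs ! k)"
    using d sneq smod unfolding L_def by (metis distinct_conv_nth length_map nth_map)
  define C where "C = map (\<lambda>k. (own (zs ! k), zs ! (Suc k mod L))) [0..<L]"
  have lC: "length C = L" unfolding C_def by simp
  have Ck: "\<And>k. k < L \<Longrightarrow> C ! k = (own (zs ! k), zs ! (Suc k mod L))" unfolding C_def by simp
  have mf: "map fst C = map own zs"
    by (rule nth_equalityI) (auto simp: lC Ck L_def)
  have ms: "map snd C = rotate1 zs"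
    by (rule nth_equalityI) (auto simp: lC Ck L_def nth_rotate1)
  have notin: "\<And>k. k < L \<Longrightarrow> zs ! (Suc k mod L) \<notin> mu (own (zs ! k))"
  proof -
    fix k assume k: "k < L"
    have "zs ! (Suc k mod L) \<in> mu (own (zs ! (Suc k mod L)))" "own (zs ! (Suc k mod L)) \<in> I"
      using owk[OF smod[OF k]] by auto
    then show "zs ! (Suc k mod L) \<notin> mu (own (zs ! k))"
      using dj owk[OF k] ownne[OF k] unfolding disj_def by blast
  qed
  have c1: "C \<noteq> []" using L0 lC by auto
  have c2: "distinct (map fst C)" using d mf by simp
  have c3: "distinct (map snd C)" using dz ms by simp
  have c4: "\<forall>k<length C. fst (C ! k) \<in> I" using owk Ck lC by simp
  have c5: "\<forall>k. 1 \<le> k \<and> k < length C \<longrightarrow> snd (C ! (k - 1)) \<in> mu (fst (C ! k)) \<and> snd (C ! k) \<notin> mu (fst (C ! k))"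
  proof (intro allI impI)
    fix k assume k: "1 \<le> k \<and> k < length C"
    then have k1: "k - 1 < L" "k < L" "Suc (k - 1) = k" using lC by auto
    show "snd (C ! (k - 1)) \<in> mu (fst (C ! k)) \<and> snd (C ! k) \<notin> mu (fst (C ! k))"
      using Ck[OF k1(1)] Ck[OF k1(2)] owk[OF k1(2)] k1 notin[OF k1(2)] by simp
  qed
  have c6: "snd (C ! (length C - 1)) \<in> mu (fst (C ! 0))"
  proof -
    have "L - 1 < L" "Suc (L - 1) = L" using L0 by auto
    then show ?thesis using Ck[of "L - 1"] Ck[OF L0] owk[OF L0] lC by simp
  qed
  have cyc: "is_cycle I mu C" unfolding is_cycle_def using c1 c2 c3 c4 c5 c6 by blast
  have cw: "cycle_cw_IR A B C"
    unfolding cycle_cw_IR_def using ev Ck lC unfolding Ev_def by simp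
  have pr: "\<And>k. k < L \<Longrightarrow> snd (C ! cyc_prev (length C) k) = zs ! k"
    using Ck lC cyc_prev_lt suc_cyc_prev by simp
  have cpi: "cycle_pareto_improving I A mu C"
  proof (rule cpi_char[OF cyc _ dj fm, THEN iffD2])
    show "2 \<le> length C" using L2 lC by simp
    show "(\<exists>k<length C. snd (C ! k) \<in> A (fst (C ! k)) \<and> snd (C ! cyc_prev (length C) k) \<notin> A (fst (C ! k))) \<and>
    (\<forall>k<length C. snd (C ! cyc_prev (length C) k) \<in> A (fst (C ! k)) \<longrightarrow> snd (C ! k) \<in> A (fst (C ! k)))"
    proof
      show "\<exists>k<length C. snd (C ! k) \<in> A (fst (C ! k)) \<and> snd (C ! cyc_prev (length C) k) \<notin> A (fst (C ! k))"
        using k0 Ck[OF k0(1)] pr[OF k0(1)] lC unfolding Imp_def by (intro exI[of _ k0]) simp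
      show "\<forall>k<length C. snd (C ! cyc_prev (length C) k) \<in> A (fst (C ! k)) \<longrightarrow> snd (C ! k) \<in> A (fst (C ! k))"
        using ev Ck pr lC unfolding Ev_def by simp
    qed
  qed
  show ?thesis using cyc cw cpi by blast
qed


lemma dir2:
  assumes ec: "economy I Obj Om" and ab: "AB_profile I Obj Om A B" and m: "matching I Obj Om mu"
    and cw: "cw_IR I Om (induced A B) mu"
    and nue: "\<not> unambiguously_efficient I Obj Om (induced A B) mu"
  shows "\<exists>C. is_cycle I mu C \<and> cycle_cw_IR A B C \<and> cycle_pareto_improving I A mu C"
proof -
  have fO: "finite Obj" using econ_finite[OF ec] .
  have fI: "finite I" using ec unfolding economy_def by simp
  have dj: "disj I mu" using match_disj[OF m] .
  have fm: "\<forall>i\<in>I. finite (mu i)" using match_fin[OF m fO] by blast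
  obtain R where R: "\<forall>i\<in>I. preference_on (consumption Obj (card (Om i))) (R i)
               \<and> responsive Obj (consumption Obj (card (Om i))) (R i) (induced A B i)"
    and npe: "\<not> pareto_efficient I Obj Om R mu"
    using nue unfolding unambiguously_efficient_def by blast
  obtain mu' where m': "matching I Obj Om mu'" and pi: "pareto_improves I R mu' mu"
    using npe unfolding pareto_efficient_def by blast
  have Xmu: "\<And>i. i \<in> I \<Longrightarrow> mu i \<in> consumption Obj (card (Om i))"
    unfolding consumption_def using match_sub[OF m] match_card[OF m] by blast
  have Xmu': "\<And>i. i \<in> I \<Longrightarrow> mu' i \<in> consumption Obj (card (Om i))"
    unfolding consumption_def using match_sub[OF m'] match_card[OF m'] by blast
  have subAB: "\<And>i. i \<in> I \<Longrightarrow> mu i \<subseteq> A i \<union> B i" using cwIR_sub[OF ec ab m cw] by blast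
  have RR: "\<And>i. i \<in> I \<Longrightarrow> R i (mu' i) (mu i)" using pi unfolding pareto_improves_def by blast
  have AP: "\<And>i. i \<in> I \<Longrightarrow> card (mu i \<inter> A i) \<le> card (mu' i \<inter> A i)
     \<and> (card (mu i \<inter> A i) = card (mu' i \<inter> A i) \<longrightarrow> mu' i \<subseteq> A i \<union> B i)
     \<and> (\<not> R i (mu i) (mu' i) \<longrightarrow> card (mu i \<inter> A i) < card (mu' i \<inter> A i))"
  proof -
    fix i assume i: "i \<in> I"
    have p: "preference_on (consumption Obj (card (Om i))) (R i)"
      and r: "responsive Obj (consumption Obj (card (Om i))) (R i) (induced A B i)" using R i by blast+
    note ap = agent_pref[OF p r refl fO Xmu[OF i] Xmu'[OF i] subAB[OF i] RR[OF i]]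
    show "?thesis i" using ap by blast
  qed
  have F1: "\<forall>j\<in>I. card (mu j \<inter> A j) \<le> card (mu' j \<inter> A j)" using AP by blast
  have F2: "\<forall>j\<in>I. card (mu j \<inter> A j) = card (mu' j \<inter> A j) \<longrightarrow> mu' j \<subseteq> A j \<union> B j" using AP by blast
  have F3: "\<exists>j\<in>I. card (mu j \<inter> A j) < card (mu' j \<inter> A j)"
    using pi AP unfolding pareto_improves_def strict_def by blast
  have dmu: "\<forall>i\<in>I. \<forall>j\<in>I. i \<noteq> j \<longrightarrow> mu i \<inter> mu j = {}" using m unfolding matching_def by simp
  have dmu': "\<forall>i\<in>I. \<forall>j\<in>I. i \<noteq> j \<longrightarrow> mu' i \<inter> mu' j = {}" using m' unfolding matching_def by simp
  have sub: "\<forall>i\<in>I. mu i \<subseteq> Obj" using match_sub[OF m] by blast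
  have sub': "\<forall>i\<in>I. mu' i \<subseteq> Obj" using match_sub[OF m'] by blast
  have cov: "(\<Union>i\<in>I. mu i) = Obj" using cover[OF ec m] .
  have cd: "\<forall>i\<in>I. card (mu' i) = card (mu i)" using match_card[OF m] match_card[OF m'] by simp
  define Er where "Er = {(g,r). \<exists>j\<in>I. g \<in> mu j - mu' j \<and> r \<in> mu' j - mu j \<and> r \<in> A j \<union> B j \<and> (g \<in> A j \<longrightarrow> r \<in> A j)}"
  obtain j g r where jgr: "j \<in> I" "g \<in> mu j - mu' j" "r \<in> mu' j - mu j" "r \<in> A j" "g \<notin> A j" "(r, g) \<in> Er\<^sup>*"
    using key[OF fI fO dmu dmu' sub sub' cov cd F1 F2 F3 Er_def] by blast
  obtain ys where ys: "ys \<noteq> []" "hd ys = r" "last ys = g" "adj ys \<subseteq> Er" "set ys \<subseteq> insert r (snd ` Er)"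
    using path_of_rtrancl[OF jgr(6)] by blast
  define own where "own x = (THE j. j \<in> I \<and> x \<in> mu j)" for x
  have owneq: "\<And>j x. j \<in> I \<Longrightarrow> x \<in> mu j \<Longrightarrow> own x = j" unfolding own_def using own_eq[OF dj] by blast
  have EvEr: "\<And>p. p \<in> Er \<Longrightarrow> Ev A B own p"
  proof -
    fix p assume "p \<in> Er"
    then obtain a b k where p: "p = (a, b)" "k \<in> I" "a \<in> mu k" "b \<in> A k \<union> B k" "a \<in> A k \<longrightarrow> b \<in> A k"
      unfolding Er_def by blast
    then have "own a = k" using owneq by blast
    then show "Ev A B own p" using p unfolding Ev_def by simp
  qed
  have ownj: "own g = j" using owneq jgr(1,2) by blast
  have cpys: "cp ys = adj ys \<union> {(g, r)}" using cp_single[OF ys(1)] ys(2,3) by simp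
  have wok: "walkok A B own ys"
    unfolding walkok_def
  proof (intro conjI)
    show "ys \<noteq> []" by fact
    show "\<forall>p\<in>cp ys. Ev A B own p"
    proof
      fix p assume "p \<in> cp ys"
      then have "p \<in> adj ys \<or> p = (g, r)" using cpys by blast
      then show "Ev A B own p"
      proof
        assume "p \<in> adj ys" then show ?thesis using EvEr ys(4) by blast
      next
        assume "p = (g, r)" then show ?thesis using ownj jgr(4) unfolding Ev_def by simp
      qed
    qed
    show "\<exists>p\<in>cp ys. Imp A own p"
      using cpys ownj jgr(4,5) unfolding Imp_def by (intro bexI[of _ "(g, r)"]) auto
  qed
  obtain zs where zs: "walkok A B own zs" "distinct (map own zs)" "set zs \<subseteq> set ys"
    using reduce[OF wok] by blast
  have setO: "set ys \<subseteq> Obj"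
  proof -
    have "r \<in> Obj" using jgr(1,3) sub' by blast
    moreover have "snd ` Er \<subseteq> Obj" unfolding Er_def using sub' by fastforce
    ultimately show ?thesis using ys(5) by blast
  qed
  have ow: "\<forall>x\<in>set zs. own x \<in> I \<and> x \<in> mu (own x)"
  proof
    fix x assume "x \<in> set zs"
    then have "x \<in> Obj" using zs(3) setO by blast
    then obtain k where "k \<in> I" "x \<in> mu k" using cov by blast
    then show "own x \<in> I \<and> x \<in> mu (own x)" using owneq by simp
  qed
  show ?thesis using walk_to_cycle[OF dj ow zs(1,2) fm] .
qed


theorem lemma2:
  fixes I :: "'i set" and Obj :: "'x set" and Om :: "'i \<Rightarrow> 'x set"
    and A B :: "'i \<Rightarrow> 'x set" and mu :: "'i \<Rightarrow> 'x set"
  assumes "economy I Obj Om"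
    and "AB_profile I Obj Om A B"
    and "matching I Obj Om mu"
    and "cw_IR I Om (induced A B) mu"
  shows "unambiguously_efficient I Obj Om (induced A B) mu \<longleftrightarrow>
         \<not> (\<exists>C. is_cycle I mu C \<and> cycle_cw_IR A B C \<and> cycle_pareto_improving I A mu C)"
proof
  assume ue: "unambiguously_efficient I Obj Om (induced A B) mu"
  show "\<not> (\<exists>C. is_cycle I mu C \<and> cycle_cw_IR A B C \<and> cycle_pareto_improving I A mu C)"
    using dir1[OF assms(1) assms(3)] ue by blast
next
  assume "\<not> (\<exists>C. is_cycle I mu C \<and> cycle_cw_IR A B C \<and> cycle_pareto_improving I A mu C)"
  then show "unambiguously_efficient I Obj Om (induced A B) mu"
    using dir2[OF assms] by blast
qed

end
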